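(* Let $\mathcal X$ be a Banach space, $\mathcal U\subset\mathcal X$ open, $\mathcal E:\mathcal U\to\mathbb R$ a $C^2$ function and $x_\infty\in\mathcal U$ with $\mathcal E'(x_\infty)=0$. Suppose $\mathcal E$ is Morse–Bott at $x_\infty$, so that $\mathcal U\cap\mathrm{Crit}\,\mathcal E$ is a relatively open smooth submanifold of $\mathcal X$ and $K:=\mathrm{Ker}\,\mathcal E''(x_\infty)=T_{x_\infty}\mathrm{Crit}\,\mathcal E$. Assume that $K$ has a closed complement $\mathcal X_0\subset\mathcal X$ and that $\mathrm{Ran}\,\mathcal E''(x_\infty)\subset\mathcal X^*$ is closed. Then there are constants $Z\in(0,\infty)$ and $\sigma\in(0,1]$ such that every $x\in\mathcal U$ with $\|x-x_\infty\|_{\mathcal X}<\sigma$ satisfies $$\|\mathcal E'(x)\|_{\mathcal X^*}\geq Z\,|\mathcal E(x)-\mathcal E(x_\infty)|^{1/2}.$$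
   Context: $\mathrm{Crit}\,\mathcal E=\{x:\mathcal E'(x)=0\}$; $\mathcal E''(x):\mathcal X\to\mathcal X^*$ is the Hessian. $\mathcal E$ is Morse–Bott at $x_0$ if some open neighborhood $\mathcal U$ of $x_0$ has $\mathcal U\cap\mathrm{Crit}\,\mathcal E$ a relatively open smooth submanifold and $T_{x_0}\mathrm{Crit}\,\mathcal E=\mathrm{Ker}\,\mathcal E''(x_0)$. *)

theory Defs
  imports "HOL-Analysis.Analysis"
begin

text \<open>A k-linear map from X^k to Y is represented as a function on lists; only its
  values on lists of length k matter.\<close>

definition mlin_bounded :: "nat \<Rightarrow> ('a::real_normed_vector list \<Rightarrow> 'b::real_normed_vector) \<Rightarrow> bool" where
  "mlin_bounded k m \<longleftrightarrow>
     (\<forall>i<k. \<forall>hs. length hs = k \<longrightarrow> linear (\<lambda>v. m (hs[i := v]))) \<and>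
     (\<exists>C. \<forall>hs. length hs = k \<longrightarrow> norm (m hs) \<le> C * prod_list (map norm hs))"

definition mlin_norm :: "nat \<Rightarrow> ('a::real_normed_vector list \<Rightarrow> 'b::real_normed_vector) \<Rightarrow> real" where
  "mlin_norm k m = (SUP hs \<in> {hs. length hs = k \<and> (\<forall>h\<in>set hs. norm h \<le> 1)}. norm (m hs))"

definition Ck_on :: "nat \<Rightarrow> 'a::real_normed_vector set \<Rightarrow> ('a \<Rightarrow> 'b::real_normed_vector) \<Rightarrow> bool" where
  "Ck_on k U f \<longleftrightarrow>
     (\<exists>D :: nat \<Rightarrow> 'a \<Rightarrow> 'a list \<Rightarrow> 'b.
        (\<forall>x\<in>U. D 0 x [] = f x) \<and>
        (\<forall>j\<le>k. \<forall>x\<in>U. mlin_bounded j (D j x)) \<and>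
        (\<forall>j<k. \<forall>x\<in>U.
           ((\<lambda>y. mlin_norm j (\<lambda>hs. D j y hs - D j x hs - D (Suc j) x ((y - x) # hs)) / norm (y - x))
              \<longlongrightarrow> 0) (at x within U)) \<and>
        (\<forall>j\<le>k. \<forall>x\<in>U. ((\<lambda>y. mlin_norm j (\<lambda>hs. D j y hs - D j x hs)) \<longlongrightarrow> 0) (at x within U)))"

definition smooth_on :: "'a::real_normed_vector set \<Rightarrow> ('a \<Rightarrow> 'b::real_normed_vector) \<Rightarrow> bool" where
  "smooth_on U f \<longleftrightarrow> (\<forall>k. Ck_on k U f)"

definition smooth_submanifold :: "'a::banach set \<Rightarrow> bool" where
  "smooth_submanifold M \<longleftrightarrow>
     (\<forall>p\<in>M. \<exists>V W (\<phi>::'a \<Rightarrow> 'a) \<psi> F.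
        open V \<and> p \<in> V \<and> open W \<and> closed F \<and> subspace F \<and>
        \<phi> ` V = W \<and> (\<forall>x\<in>V. \<psi> (\<phi> x) = x) \<and> (\<forall>y\<in>W. \<phi> (\<psi> y) = y) \<and>
        smooth_on V \<phi> \<and> smooth_on W \<psi> \<and> \<phi> ` (V \<inter> M) = W \<inter> F)"

definition tangent_space :: "'a::banach set \<Rightarrow> 'a \<Rightarrow> 'a set" where
  "tangent_space M p =
     {v. \<exists>(\<gamma>::real \<Rightarrow> 'a) \<epsilon>. \<epsilon> > 0 \<and> Ck_on 1 {-\<epsilon><..<\<epsilon>} \<gamma> \<and> \<gamma> ` {-\<epsilon><..<\<epsilon>} \<subseteq> M \<and>
         \<gamma> 0 = p \<and> (\<gamma> has_vector_derivative v) (at 0)}"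

definition Crit :: "'a::real_normed_vector set \<Rightarrow> ('a \<Rightarrow> ('a \<Rightarrow>\<^sub>L real)) \<Rightarrow> 'a set" where
  "Crit U E' = {x \<in> U. E' x = 0}"

definition morse_bott_at ::
  "'a::banach set \<Rightarrow> ('a \<Rightarrow> ('a \<Rightarrow>\<^sub>L real)) \<Rightarrow> ('a \<Rightarrow> ('a \<Rightarrow>\<^sub>L ('a \<Rightarrow>\<^sub>L real))) \<Rightarrow> 'a \<Rightarrow> bool" where
  "morse_bott_at U E' E'' x0 \<longleftrightarrow>
     (\<exists>V. open V \<and> x0 \<in> V \<and> V \<subseteq> U \<and>
        smooth_submanifold (V \<inter> Crit U E') \<and>
        tangent_space (V \<inter> Crit U E') x0 = {v. E'' x0 v = 0})"

end

theory Submission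
  imports Defs
begin


lemma approx_to_exact:
  fixes T :: "'a::banach \<Rightarrow> 'b::real_normed_vector"
  assumes bl: "bounded_linear T" and S: "closed S" "subspace S" and a: "a \<ge> 0"
    and approx: "\<And>y. y \<in> T ` S \<Longrightarrow> \<exists>x\<in>S. norm x \<le> a * norm y \<and> norm (y - T x) \<le> norm y / 2"
    and y: "y \<in> T ` S"
  shows "\<exists>x\<in>S. norm x \<le> 2 * a * norm y \<and> T x = y"
proof -
  interpret T: bounded_linear T by fact
  obtain g where g: "\<And>y. y \<in> T ` S \<Longrightarrow> g y \<in> S \<and> norm (g y) \<le> a * norm y \<and> norm (y - T (g y)) \<le> norm y / 2"
    using approx by metis
  define r where "r = rec_nat y (\<lambda>_ r. r - T (g r))"
  have r0: "r 0 = y" and rS: "\<And>k. r (Suc k) = r k - T (g (r k))" by (simp_all add: r_def)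
  have rin: "r k \<in> T ` S \<and> norm (r k) \<le> (1/2)^k * norm y" for k
  proof (induction k)
    case 0 then show ?case using y r0 by simp
  next
    case (Suc k)
    then obtain s where s: "s \<in> S" "r k = T s" by auto
    have "r (Suc k) = T (s - g (r k))" using s rS T.diff by simp
    moreover have "s - g (r k) \<in> S" using s g Suc S(2) by (simp add: subspace_diff)
    ultimately have 1: "r (Suc k) \<in> T ` S" by blast
    have "norm (r (Suc k)) \<le> norm (r k) / 2" using g Suc rS by simp
    also have "\<dots> \<le> (1/2)^Suc k * norm y" using Suc by simp
    finally show ?case using 1 by simp
  qed
  define x where "x k = g (r k)" for k
  have xS: "x k \<in> S" for k using g rin x_def by auto
  have xn: "norm (x k) \<le> a * ((1/2)^k * norm y)" for k
  proof -
    have "norm (x k) \<le> a * norm (r k)" using g[of "r k"] rin[of k] x_def by simp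
    also have "\<dots> \<le> a * ((1/2)^k * norm y)" using rin[of k] a by (simp add: mult_left_mono)
    finally show ?thesis .
  qed
  have sg: "summable (\<lambda>k. a * ((1/2)^k * norm y))"
    by (intro summable_mult summable_mult2) simp
  have sx: "summable x" by (rule summable_comparison_test'[OF sg xn])
  have snx: "summable (\<lambda>k. norm (x k))" by (rule summable_comparison_test'[OF sg]) (use xn in simp)
  have "(\<lambda>n. \<Sum>k<n. x k) \<longlonglongrightarrow> suminf x" using sx summable_LIMSEQ by blast
  moreover have "\<forall>\<^sub>F n in sequentially. (\<Sum>k<n. x k) \<in> S" using xS S(2) by (simp add: subspace_sum)
  ultimately have xsS: "suminf x \<in> S" using S(1) by (metis Lim_in_closed_set trivial_limit_sequentially)
  have Tx: "T (x k) = r k - r (Suc k)" for k using rS x_def by simp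
  have "(\<lambda>k. T (x k)) sums T (suminf x)" using T.sums sx summable_sums by blast
  moreover have "(\<lambda>k. r k - r (Suc k)) sums (r 0 - 0)"
  proof (rule telescope_sums')
    have "(\<lambda>k. (1/2)^k * norm y) \<longlonglongrightarrow> 0 * norm y"
      by (intro tendsto_mult tendsto_const LIMSEQ_power_zero) simp
    then have lim: "(\<lambda>k. (1/2)^k * norm y) \<longlonglongrightarrow> 0" by simp
    show "r \<longlonglongrightarrow> 0"
    proof (rule Lim_null_comparison[OF _ lim])
      show "\<forall>\<^sub>F k in sequentially. norm (r k) \<le> (1/2)^k * norm y"
        using rin by (simp add: always_eventually)
    qed
  qed
  ultimately have "T (suminf x) = y" using Tx r0 sums_unique2 by fastforce
  moreover have "norm (suminf x) \<le> 2 * a * norm y"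
  proof -
    have "norm (suminf x) \<le> (\<Sum>k. norm (x k))" by (rule summable_norm[OF snx])
    also have "\<dots> \<le> (\<Sum>k. a * ((1/2)^k * norm y))" by (rule suminf_le[OF xn snx sg])
    also have "\<dots> = a * ((\<Sum>k. (1/2::real)^k) * norm y)"
      by (simp add: suminf_mult suminf_mult2 summable_mult2)
    also have "\<dots> = 2 * a * norm y" by (simp add: suminf_geometric)
    finally show ?thesis .
  qed
  ultimately show ?thesis using xsS by blast
qed



lemma baire_approx:
  fixes T :: "'a::banach \<Rightarrow> 'b::banach"
  assumes bl: "bounded_linear T" and S: "closed S" "subspace S" and R: "closed (T ` S)"
  shows "\<exists>a\<ge>0. \<forall>y\<in>T ` S. \<exists>x\<in>S. norm x \<le> a * norm y \<and> norm (y - T x) \<le> norm y / 2"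
proof -
  interpret T: bounded_linear T by fact
  define C where "C n = T ` S \<inter> closure (T ` (S \<inter> cball 0 (real n)))" for n :: nat
  let ?X = "top_of_set (T ` S)"
  have cm: "completely_metrizable_space ?X"
    by (rule completely_metrizable_space_closedin[OF completely_metrizable_space_euclidean])
       (use R closed_closedin in auto)
  have RS: "subspace (T ` S)" using T.linear_axioms S(2) by (rule linear_subspace_image)
  have un: "\<Union>(range C) = T ` S"
  proof
    show "\<Union>(range C) \<subseteq> T ` S" by (auto simp: C_def)
    show "T ` S \<subseteq> \<Union>(range C)"
    proof
      fix y assume "y \<in> T ` S"
      then obtain s where s: "s \<in> S" "y = T s" by auto
      obtain n :: nat where "norm s \<le> real n" using real_arch_simple by blast
      then have "y \<in> T ` (S \<inter> cball 0 (real n))" using s by auto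
      then have "y \<in> closure (T ` (S \<inter> cball 0 (real n)))" by (rule subsetD[OF closure_subset])
      then have "y \<in> C n" unfolding C_def using \<open>y \<in> T ` S\<close> by blast
      then show "y \<in> \<Union>(range C)" by blast
    qed
  qed
  have "\<exists>n. ?X interior_of C n \<noteq> {}"
  proof (rule ccontr)
    assume "\<not> ?thesis"
    then have "?X interior_of \<Union>(range C) = {}"
      apply (intro Baire_category_alt)
      using cm apply blast
       apply simp
      apply (auto simp: C_def closedin_subtopology intro!: exI[where x="closure (T ` (S \<inter> cball 0 (real _)))"])
      done
    moreover have "?X interior_of \<Union>(range C) = T ` S"
      unfolding un by (rule interior_of_openin) (metis openin_topspace topspace_euclidean_subtopology)
    moreover have "0 \<in> T ` S" using S(2) by (metis T.zero image_eqI subspace_0)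
    ultimately show False by auto
  qed
  then obtain n y1 where "y1 \<in> ?X interior_of C n" by blast
  then obtain Op where Op: "openin ?X Op" "y1 \<in> Op" "Op \<subseteq> C n" by (auto simp: interior_of_def)
  then obtain G where G: "open G" "Op = G \<inter> T ` S" by (auto simp: openin_open)
  then obtain r where r: "r > 0" "ball y1 r \<subseteq> G" using Op(2) open_contains_ball by blast
  have y1R: "y1 \<in> T ` S" using Op G by auto
  have key: "\<exists>x\<in>S. norm x \<le> 2 * real n \<and> norm (y - T x) < \<delta>"
    if y: "y \<in> T ` S" "norm y < r" and d: "\<delta> > 0" for y \<delta>
  proof -
    have "y1 + y \<in> T ` S" using y1R y RS by (simp add: subspace_add)
    moreover have "y1 + y \<in> ball y1 r" using y by (simp add: dist_norm)
    ultimately have "y1 + y \<in> C n" using r G Op by blast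
    then have "y1 + y \<in> closure (T ` (S \<inter> cball 0 (real n)))" by (simp add: C_def)
    then have "\<forall>e>0. \<exists>a\<in>S \<inter> cball 0 (real n). dist (T a) (y1 + y) < e" by (simp add: closure_approachable)
    then obtain s1 where s10: "s1 \<in> S \<inter> cball 0 (real n)" "dist (T s1) (y1 + y) < \<delta>/2"
      using d by (meson half_gt_zero)
    then have s1: "s1 \<in> S" "norm s1 \<le> real n" "dist (T s1) (y1 + y) < \<delta>/2" by auto
    have "y1 \<in> C n" using Op by blast
    then have "y1 \<in> closure (T ` (S \<inter> cball 0 (real n)))" by (simp add: C_def)
    then have "\<forall>e>0. \<exists>a\<in>S \<inter> cball 0 (real n). dist (T a) y1 < e" by (simp add: closure_approachable)
    then obtain s2 where s20: "s2 \<in> S \<inter> cball 0 (real n)" "dist (T s2) y1 < \<delta>/2"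
      using d by (meson half_gt_zero)
    then have s2: "s2 \<in> S" "norm s2 \<le> real n" "dist (T s2) y1 < \<delta>/2" by auto
    have "s1 - s2 \<in> S" using s1 s2 S(2) by (simp add: subspace_diff)
    moreover have "norm (s1 - s2) \<le> 2 * real n"
      using norm_triangle_ineq4[of s1 s2] s1 s2 by linarith
    moreover have "norm (y - T (s1 - s2)) < \<delta>"
    proof -
      have "y - T (s1 - s2) = (T s2 - y1) - (T s1 - (y1 + y))" by (simp add: T.diff algebra_simps)
      then have "norm (y - T (s1 - s2)) \<le> norm (T s2 - y1) + norm (T s1 - (y1 + y))"
        by (metis norm_triangle_ineq4)
      then show ?thesis using s1 s2 by (simp add: dist_norm)
    qed
    ultimately show ?thesis by blast
  qed
  show ?thesis
  proof (intro exI[where x="4 * real n / r"] conjI ballI)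
    show "0 \<le> 4 * real n / r" using r by simp
    fix y assume y: "y \<in> T ` S"
    show "\<exists>x\<in>S. norm x \<le> 4 * real n / r * norm y \<and> norm (y - T x) \<le> norm y / 2"
    proof (cases "y = 0")
      case True then show ?thesis using S(2) by (intro bexI[where x=0]) (auto simp: subspace_0)
    next
      case False
      define t where "t = 2 * norm y / r"
      have t: "t > 0" using False r by (simp add: t_def)
      have y'R: "(1/t) *\<^sub>R y \<in> T ` S" using y RS by (simp add: subspace_scale)
      have "norm ((1/t) *\<^sub>R y) = r / 2" using t False r by (simp add: t_def)
      then have "norm ((1/t) *\<^sub>R y) < r" using r by simp
      then obtain x' where x': "x' \<in> S" "norm x' \<le> 2 * real n" "norm ((1/t) *\<^sub>R y - T x') < r/4"
        using key[OF y'R] r by (metis divide_pos_pos zero_less_numeral)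
      have xS: "t *\<^sub>R x' \<in> S" using x' S(2) by (simp add: subspace_scale)
      have "norm (t *\<^sub>R x') \<le> t * (2 * real n)" using x' t by (simp add: mult_left_mono)
      also have "\<dots> = 4 * real n / r * norm y" by (simp add: t_def)
      finally have n1: "norm (t *\<^sub>R x') \<le> 4 * real n / r * norm y" .
      have "y - T (t *\<^sub>R x') = t *\<^sub>R ((1/t) *\<^sub>R y - T x')" using t by (simp add: T.scaleR algebra_simps)
      then have "norm (y - T (t *\<^sub>R x')) = t * norm ((1/t) *\<^sub>R y - T x')" using t by simp
      also have "\<dots> \<le> t * (r/4)" using x' t by simp
      also have "\<dots> = norm y / 2" using r by (simp add: t_def)
      finally show ?thesis using xS n1 by blast
    qed
  qed
qed



lemma bounded_below:
  fixes T :: "'a::banach \<Rightarrow> 'b::banach"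
  assumes bl: "bounded_linear T" and S: "closed S" "subspace S" and R: "closed (T ` S)"
    and inj: "inj_on T S"
  shows "\<exists>c>0. \<forall>x\<in>S. c * norm x \<le> norm (T x)"
proof -
  obtain a where a: "a \<ge> 0" "\<forall>y\<in>T ` S. \<exists>x\<in>S. norm x \<le> a * norm y \<and> norm (y - T x) \<le> norm y / 2"
    using baire_approx[OF assms(1-4)] by blast
  have "norm x \<le> 2 * a * norm (T x)" if x: "x \<in> S" for x
  proof -
    obtain x' where "x' \<in> S" "norm x' \<le> 2 * a * norm (T x)" "T x' = T x"
      using approx_to_exact[OF bl S a(1), of "T x"] a(2) x by blast
    then show ?thesis using inj x by (metis inj_onD)
  qed
  then show ?thesis using a(1)
    by (intro exI[where x="1 / (2 * a + 1)"]) (auto simp: field_simps, smt (verit) norm_ge_zero)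
qed



lemma mlin_norm0: "mlin_norm 0 m = norm (m [])"
proof -
  have e: "{hs. length hs = 0 \<and> (\<forall>h\<in>set hs. norm h \<le> 1)} = {[]}" by auto
  show ?thesis unfolding mlin_norm_def e by simp
qed

lemma mlin1_bl:
  fixes m :: "'a::real_normed_vector list \<Rightarrow> 'b::real_normed_vector"
  assumes "mlin_bounded 1 m"
  shows "bounded_linear (\<lambda>h. m [h])"
proof -
  have "\<forall>hs. length hs = 1 \<longrightarrow> linear (\<lambda>v. m (hs[0 := v]))" using assms by (simp add: mlin_bounded_def)
  from this[rule_format, of "[0]"] have lin0: "linear (\<lambda>v. m ([0][0 := v]))" by simp
  then have lin: "linear (\<lambda>v. m [v])" by simp
  from assms obtain C where C: "\<And>hs. length hs = 1 \<Longrightarrow> norm (m hs) \<le> C * prod_list (map norm hs)"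
    by (auto simp: mlin_bounded_def)
  have "norm (m [h]) \<le> norm h * C" for h using C[of "[h]"] by (simp add: mult.commute)
  then show ?thesis using lin by (intro bounded_linear_intro[where K=C]) (auto simp: linear_iff)
qed

lemma mlin1_bound:
  fixes m1 m2 :: "'a::real_normed_vector list \<Rightarrow> 'b::real_normed_vector"
  assumes "mlin_bounded 1 m1" "mlin_bounded 1 m2"
  shows "norm (m1 [h] - m2 [h]) \<le> mlin_norm 1 (\<lambda>hs. m1 hs - m2 hs) * norm h"
    and "0 \<le> mlin_norm 1 (\<lambda>hs. m1 hs - m2 hs)"
proof -
  let ?S = "{hs. length hs = 1 \<and> (\<forall>h\<in>set hs. norm h \<le> (1::real))} :: 'a list set"
  let ?g = "\<lambda>hs. norm (m1 hs - m2 hs)"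
  from assms obtain C1 C2 where C1: "\<And>hs. length hs = 1 \<Longrightarrow> norm (m1 hs) \<le> C1 * prod_list (map norm hs)"
    and C2: "\<And>hs. length hs = 1 \<Longrightarrow> norm (m2 hs) \<le> C2 * prod_list (map norm hs)"
    by (auto simp: mlin_bounded_def)
  have bdd: "bdd_above (?g ` ?S)"
  proof (rule bdd_aboveI2)
    fix hs assume "hs \<in> ?S"
    then obtain h where h: "hs = [h]" "norm h \<le> 1" by (auto simp: length_Suc_conv)
    have "?g hs \<le> norm (m1 hs) + norm (m2 hs)" by (rule norm_triangle_ineq4)
    also have "\<dots> \<le> C1 * norm h + C2 * norm h" using C1[of hs] C2[of hs] h by simp
    also have "\<dots> \<le> \<bar>C1\<bar> + \<bar>C2\<bar>"
    proof -
      have "C1 * norm h \<le> \<bar>C1\<bar>" using h(2)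
        by (meson abs_ge_self abs_ge_zero mult_left_le mult_right_mono norm_ge_zero order_trans)
      moreover have "C2 * norm h \<le> \<bar>C2\<bar>" using h(2)
        by (meson abs_ge_self abs_ge_zero mult_left_le mult_right_mono norm_ge_zero order_trans)
      ultimately show ?thesis by simp
    qed
    finally show "?g hs \<le> \<bar>C1\<bar> + \<bar>C2\<bar>" .
  qed
  have upper: "?g hs \<le> mlin_norm 1 (\<lambda>hs. m1 hs - m2 hs)" if "hs \<in> ?S" for hs
    unfolding mlin_norm_def by (rule cSUP_upper[OF that bdd])
  show nn: "0 \<le> mlin_norm 1 (\<lambda>hs. m1 hs - m2 hs)"
    using upper[of "[0]"] by (simp add: order_trans[OF norm_ge_zero])
  interpret l1: bounded_linear "\<lambda>h. m1 [h]" by (rule mlin1_bl[OF assms(1)])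
  interpret l2: bounded_linear "\<lambda>h. m2 [h]" by (rule mlin1_bl[OF assms(2)])
  show "norm (m1 [h] - m2 [h]) \<le> mlin_norm 1 (\<lambda>hs. m1 hs - m2 hs) * norm h"
  proof (cases "h = 0")
    case True then show ?thesis using l1.zero l2.zero by simp
  next
    case False
    have "[(1 / norm h) *\<^sub>R h] \<in> ?S" using False by simp
    then have "?g [(1 / norm h) *\<^sub>R h] \<le> mlin_norm 1 (\<lambda>hs. m1 hs - m2 hs)" by (rule upper)
    moreover have "?g [(1 / norm h) *\<^sub>R h] = norm (m1 [h] - m2 [h]) / norm h"
      using l1.scaleR[of "1/norm h" h] l2.scaleR[of "1/norm h" h]
      by (simp add: scaleR_diff_right[symmetric])
    ultimately show ?thesis using False by (simp add: divide_le_eq)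
  qed
qed

lemma Ck1_deriv:
  fixes f :: "'a::real_normed_vector \<Rightarrow> 'b::real_normed_vector"
  assumes "Ck_on 1 V f" "open V"
  obtains L :: "'a \<Rightarrow> 'a \<Rightarrow>\<^sub>L 'b" where
    "\<And>x. x \<in> V \<Longrightarrow> (f has_derivative blinfun_apply (L x)) (at x)" "continuous_on V L"
proof -
  obtain D :: "nat \<Rightarrow> 'a \<Rightarrow> 'a list \<Rightarrow> 'b" where
    D0: "\<forall>x\<in>V. D 0 x [] = f x" and
    Db: "\<forall>j\<le>1. \<forall>x\<in>V. mlin_bounded j (D j x)" and
    Dd: "\<forall>j<1. \<forall>x\<in>V. ((\<lambda>y. mlin_norm j (\<lambda>hs. D j y hs - D j x hs - D (Suc j) x ((y - x) # hs)) / norm (y - x))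
              \<longlongrightarrow> 0) (at x within V)" and
    Dc: "\<forall>j\<le>1. \<forall>x\<in>V. ((\<lambda>y. mlin_norm j (\<lambda>hs. D j y hs - D j x hs)) \<longlongrightarrow> 0) (at x within V)"
    using assms(1) unfolding Ck_on_def by blast
  have mb: "mlin_bounded 1 (D 1 x)" if "x \<in> V" for x using Db that by simp
  define L where "L x = Blinfun (\<lambda>h. D 1 x [h])" for x
  have Lapp: "blinfun_apply (L x) = (\<lambda>h. D 1 x [h])" if "x \<in> V" for x
    unfolding L_def using mlin1_bl[OF mb[OF that]] by (rule bounded_linear_Blinfun_apply)
  show ?thesis
  proof (rule that[of L])
    fix x assume x: "x \<in> V"
    have lim: "((\<lambda>y. norm (D 0 y [] - D 0 x [] - D 1 x [y - x]) / norm (y - x)) \<longlongrightarrow> 0) (at x within V)"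
      using Dd x by (simp add: mlin_norm0)
    have ev: "\<forall>\<^sub>F y in at x within V. norm (D 0 y [] - D 0 x [] - D 1 x [y - x]) / norm (y - x)
          = norm ((1 / norm (y - x)) *\<^sub>R (f y - (f x + blinfun_apply (L x) (y - x))))"
      unfolding eventually_at_filter using D0 x Lapp[OF x]
      by (intro always_eventually allI impI) (simp add: diff_diff_add divide_inverse mult.commute)
    have "((\<lambda>y. (1 / norm (y - x)) *\<^sub>R (f y - (f x + blinfun_apply (L x) (y - x)))) \<longlongrightarrow> 0) (at x within V)"
      using Lim_transform_eventually[OF lim ev] by (rule tendsto_norm_zero_cancel)
    then have "(f has_derivative blinfun_apply (L x)) (at x within V)"
      by (simp add: has_derivative_within blinfun.bounded_linear_right)
    then show "(f has_derivative blinfun_apply (L x)) (at x)" using at_within_open[OF x assms(2)] by simp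
  next
    show "continuous_on V L"
      unfolding continuous_on_def
    proof
      fix x assume x: "x \<in> V"
      have lim: "((\<lambda>y. mlin_norm 1 (\<lambda>hs. D 1 y hs - D 1 x hs)) \<longlongrightarrow> 0) (at x within V)" using Dc x by simp
      have ev: "\<forall>\<^sub>F y in at x within V. norm (L y - L x) \<le> mlin_norm 1 (\<lambda>hs. D 1 y hs - D 1 x hs)"
        unfolding eventually_at_filter
      proof (intro always_eventually allI impI)
        fix y assume "y \<noteq> x" "y \<in> V"
        show "norm (L y - L x) \<le> mlin_norm 1 (\<lambda>hs. D 1 y hs - D 1 x hs)"
        proof (rule norm_blinfun_bound)
          show "0 \<le> mlin_norm 1 (\<lambda>hs. D 1 y hs - D 1 x hs)"
            by (rule mlin1_bound(2)[OF mb[OF \<open>y \<in> V\<close>] mb[OF x]])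
          fix h
          have "blinfun_apply (L y - L x) h = D 1 y [h] - D 1 x [h]"
            unfolding minus_blinfun.rep_eq using Lapp[OF x] Lapp[OF \<open>y \<in> V\<close>] by simp
          then show "norm (blinfun_apply (L y - L x) h) \<le> mlin_norm 1 (\<lambda>hs. D 1 y hs - D 1 x hs) * norm h"
            using mlin1_bound(1)[OF mb[OF \<open>y \<in> V\<close>] mb[OF x], of h] by simp
        qed
      qed
      have "((\<lambda>y. L y - L x) \<longlongrightarrow> 0) (at x within V)" by (rule Lim_null_comparison[OF ev lim])
      then show "(L \<longlongrightarrow> L x) (at x within V)" by (rule LIM_zero_cancel)
    qed
  qed
qed



lemma hz: "(t::real) \<noteq> 0 \<Longrightarrow> c / (2 * t) * t = c / 2"
  by simp

lemma h1: "(0::real) \<le> a \<Longrightarrow> 1/(2*(a+1)) * a \<le> 1/2"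
  by simp
lemma h2: assumes "(0::real) \<le> L" "0 \<le> a" "0 < c" shows "c/(4*(L+1)*(a+1)) * a \<le> c/(4*(L+1))"
proof -
  have e: "c/(4*(L+1)*(a+1)) * a = c/(4*(L+1)) * (a/(a+1))" by simp
  have "a/(a+1) \<le> 1" using assms by simp
  moreover have "c/(4*(L+1)) \<ge> 0" using assms by simp
  ultimately show ?thesis unfolding e by (metis mult.right_neutral mult_left_mono)
qed
lemma h3: assumes "(0::real) \<le> L" "0 < c" shows "L * (c/(4*(L+1))) \<le> c/4"
proof -
  have e: "L * (c/(4*(L+1))) = c/4 * (L/(L+1))" by simp
  have "L/(L+1) \<le> 1" using assms by simp
  moreover have "c/4 \<ge> 0" using assms by simp
  ultimately show ?thesis unfolding e by (metis mult.right_neutral mult_left_mono)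
qed

theorem corollary5:
  fixes U :: "'a::banach set"
    and E :: "'a \<Rightarrow> real"
    and E' :: "'a \<Rightarrow> ('a \<Rightarrow>\<^sub>L real)"
    and E'' :: "'a \<Rightarrow> ('a \<Rightarrow>\<^sub>L ('a \<Rightarrow>\<^sub>L real))"
    and x_inf :: 'a
  assumes U_open: "open U"
    and E'_deriv: "\<forall>x\<in>U. (E has_derivative blinfun_apply (E' x)) (at x)"
    and E''_deriv: "\<forall>x\<in>U. (E' has_derivative blinfun_apply (E'' x)) (at x)"
    and E''_cont: "continuous_on U E''"
    and x_in: "x_inf \<in> U"
    and crit: "E' x_inf = 0"
    and MB: "morse_bott_at U E' E'' x_inf"
    and compl: "\<exists>X0. closed X0 \<and> subspace X0 \<and> X0 \<inter> {v. E'' x_inf v = 0} = {0} \<and>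
                  (\<forall>x. \<exists>y\<in>X0. \<exists>k\<in>{v. E'' x_inf v = 0}. x = y + k)"
    and ran_closed: "closed (range (blinfun_apply (E'' x_inf)))"
  shows "\<exists>Z \<sigma>. 0 < Z \<and> 0 < \<sigma> \<and> \<sigma> \<le> 1 \<and>
           (\<forall>x\<in>U. norm (x - x_inf) < \<sigma> \<longrightarrow>
              norm (E' x) \<ge> Z * \<bar>E x - E x_inf\<bar> powr (1/2))"
proof -
  define H where "H = E'' x_inf"
  obtain V0 where V0: "open V0" "x_inf \<in> V0" "V0 \<subseteq> U" "smooth_submanifold (V0 \<inter> Crit U E')"
     "tangent_space (V0 \<inter> Crit U E') x_inf = {v. E'' x_inf v = 0}"
    using MB unfolding morse_bott_at_def by blast
  define M where "M = V0 \<inter> Crit U E'"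
  have xM: "x_inf \<in> M" using V0 x_in crit by (simp add: M_def Crit_def)
  have Mcrit: "p \<in> U \<and> E' p = 0" if "p \<in> M" for p using that by (simp add: M_def Crit_def)
  obtain V W F and phi psi :: "'a \<Rightarrow> 'a" where ch:
    "open V" "x_inf \<in> V" "open W" "closed F" "subspace F"
    "phi ` V = W" "\<forall>x\<in>V. psi (phi x) = x" "\<forall>y\<in>W. phi (psi y) = y"
    "smooth_on V phi" "smooth_on W psi" "phi ` (V \<inter> M) = W \<inter> F"
  proof -
    have "\<exists>V W (phi::'a \<Rightarrow> 'a) psi F. open V \<and> x_inf \<in> V \<and> open W \<and> closed F \<and> subspace F \<and>
        phi ` V = W \<and> (\<forall>x\<in>V. psi (phi x) = x) \<and> (\<forall>y\<in>W. phi (psi y) = y) \<and>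
        smooth_on V phi \<and> smooth_on W psi \<and> phi ` (V \<inter> M) = W \<inter> F"
      using V0(4) xM unfolding smooth_submanifold_def M_def by (rule bspec)
    then show ?thesis using that by blast
  qed
  obtain Lphi where Lphi: "\<And>x. x \<in> V \<Longrightarrow> (phi has_derivative blinfun_apply (Lphi x)) (at x)"
    using Ck1_deriv[of V phi] ch(1,9) unfolding smooth_on_def by blast
  obtain Lpsi where Lpsi: "\<And>y. y \<in> W \<Longrightarrow> (psi has_derivative blinfun_apply (Lpsi y)) (at y)"
     and Lpsic: "continuous_on W Lpsi"
    using Ck1_deriv[of W psi] ch(3,10) unfolding smooth_on_def by blast
  define y0 where "y0 = phi x_inf"
  define A where "A = Lphi x_inf"
  define B where "B = Lpsi y0"
  have y0W: "y0 \<in> W" using ch(2,6) y0_def by blast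
  have y0F: "y0 \<in> F" using ch(11) xM ch(2) y0_def by blast
  have psiy0: "psi y0 = x_inf" using ch(7,2) y0_def by simp
  have psiM: "psi y \<in> M" if "y \<in> W \<inter> F" for y
  proof -
    have "y \<in> phi ` (V \<inter> M)" using that ch(11) by simp
    then obtain x where "x \<in> V \<inter> M" "y = phi x" by blast
    then show ?thesis using ch(7) by simp
  qed
  have BA: "B (A v) = v" for v
  proof -
    have d1: "((\<lambda>x. psi (phi x)) has_derivative (\<lambda>v. B (A v))) (at x_inf)"
      unfolding A_def B_def y0_def by (rule has_derivative_compose[OF Lphi[OF ch(2)] Lpsi[OF y0W[unfolded y0_def]]])
    have "((\<lambda>x. x) has_derivative (\<lambda>v. B (A v))) (at x_inf)"
      by (rule has_derivative_transform_within_open[OF d1 ch(1,2)]) (use ch(7) in simp)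
    then have "(\<lambda>v. B (A v)) = (\<lambda>v. v)" using has_derivative_ident has_derivative_unique by blast
    then show ?thesis by metis
  qed
  have AB: "A (B v) = v" for v
  proof -
    have d1: "((\<lambda>y. phi (psi y)) has_derivative (\<lambda>v. A (B v))) (at y0)"
      unfolding A_def B_def using has_derivative_compose[OF Lpsi[OF y0W] Lphi[OF ch(2)[folded psiy0]]] psiy0 by simp
    have "((\<lambda>x. x) has_derivative (\<lambda>v. A (B v))) (at y0)"
      by (rule has_derivative_transform_within_open[OF d1 ch(3) y0W]) (use ch(8) in simp)
    then have "(\<lambda>v. A (B v)) = (\<lambda>v. v)" using has_derivative_ident has_derivative_unique by blast
    then show ?thesis by metis
  qed
  have AK: "A k \<in> F" if k: "H k = 0" for k
  proof -
    have "k \<in> tangent_space M x_inf" using V0(5) k by (simp add: M_def H_def)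
    then obtain \<gamma> :: "real \<Rightarrow> 'a" and \<epsilon> where g: "\<epsilon> > 0" "\<gamma> ` {-\<epsilon><..<\<epsilon>} \<subseteq> M" "\<gamma> 0 = x_inf"
      "(\<gamma> has_vector_derivative k) (at 0)"
      unfolding tangent_space_def by blast
    have gd: "(\<gamma> has_derivative (\<lambda>t. t *\<^sub>R k)) (at 0)" using g(4) by (simp add: has_vector_derivative_def)
    have "((\<lambda>t. phi (\<gamma> t)) has_derivative (\<lambda>t. A (t *\<^sub>R k))) (at 0)"
      unfolding A_def using has_derivative_compose[OF gd Lphi[OF ch(2)[folded g(3)]]] g(3) by simp
    then have "((\<lambda>t. phi (\<gamma> t)) has_derivative (\<lambda>t. t *\<^sub>R A k)) (at 0 within {0<..})"
      by (simp add: A_def blinfun.scaleR_right has_derivative_at_withinI)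
    then have lim0: "((\<lambda>t. (1 / norm (t - 0)) *\<^sub>R (phi (\<gamma> t) - (y0 + (t - 0) *\<^sub>R A k))) \<longlongrightarrow> 0) (at_right 0)"
      unfolding has_derivative_within using g(3) y0_def by simp
    have ev1: "\<forall>\<^sub>F t in at_right 0. (1 / norm (t - 0)) *\<^sub>R (phi (\<gamma> t) - (y0 + (t - 0) *\<^sub>R A k))
        = (1 / t) *\<^sub>R (phi (\<gamma> t) - y0) - A k"
      unfolding eventually_at_filter by (intro always_eventually allI impI) (simp add: algebra_simps)
    have "((\<lambda>t. (1 / t) *\<^sub>R (phi (\<gamma> t) - y0) - A k) \<longlongrightarrow> 0) (at_right 0)"
      using Lim_transform_eventually[OF lim0 ev1] .
    then have lim: "((\<lambda>t. (1 / t) *\<^sub>R (phi (\<gamma> t) - y0)) \<longlongrightarrow> A k) (at_right 0)"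
      by (simp add: LIM_zero_iff)
    have cont: "continuous (at 0) \<gamma>" using g(4) has_vector_derivative_continuous by blast
    have "\<forall>\<^sub>F t in at 0. \<gamma> t \<in> V"
      using cont ch(1,2) g(3) unfolding continuous_at by (metis tendsto_def)
    moreover have "\<forall>\<^sub>F t in at (0::real). t \<in> {-\<epsilon><..<\<epsilon>}"
      using g(1) by (intro eventually_at_in_open') auto
    ultimately have "\<forall>\<^sub>F t in at (0::real). \<gamma> t \<in> V \<and> t \<in> {-\<epsilon><..<\<epsilon>}" by (rule eventually_conj)
    then have "\<forall>\<^sub>F t in at_right (0::real). \<gamma> t \<in> V \<and> t \<in> {-\<epsilon><..<\<epsilon>}"
      using eventually_at_split by blast
    then have "\<forall>\<^sub>F t in at_right (0::real). (1 / t) *\<^sub>R (phi (\<gamma> t) - y0) \<in> F"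
    proof (rule eventually_mono)
      fix t assume t: "\<gamma> t \<in> V \<and> t \<in> {-\<epsilon><..<\<epsilon>}"
      then have "\<gamma> t \<in> M" using g(2) by blast
      then have "phi (\<gamma> t) \<in> F" using t ch(11) by blast
      then show "(1 / t) *\<^sub>R (phi (\<gamma> t) - y0) \<in> F" using y0F ch(5) by (simp add: subspace_diff subspace_scale)
    qed
    then show ?thesis using Lim_in_closed_set[OF ch(4) _ trivial_limit_at_right_real lim] by blast
  qed

  obtain X0 where X0: "closed X0" "subspace X0" "X0 \<inter> {v. H v = 0} = {0}"
      "\<And>x. \<exists>y\<in>X0. \<exists>k. H k = 0 \<and> x = y + k"
  proof -
    obtain X0 where "closed X0 \<and> subspace X0 \<and> X0 \<inter> {v. E'' x_inf v = 0} = {0} \<and>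
                  (\<forall>x. \<exists>y\<in>X0. \<exists>k\<in>{v. E'' x_inf v = 0}. x = y + k)" using compl by blast
    then show ?thesis using that unfolding H_def by fastforce
  qed
  have Hbl: "bounded_linear (blinfun_apply H)" by (rule blinfun.bounded_linear_right)
  have ranX0: "blinfun_apply H ` X0 = range (blinfun_apply H)"
  proof
    show "range (blinfun_apply H) \<subseteq> blinfun_apply H ` X0"
    proof
      fix w assume "w \<in> range (blinfun_apply H)"
      then obtain x where x: "w = H x" by blast
      obtain y k where "y \<in> X0" "H k = 0" "x = y + k" using X0(4) by blast
      then have "w = H y" using x by (simp add: blinfun.add_right)
      then show "w \<in> blinfun_apply H ` X0" using \<open>y \<in> X0\<close> by blast
    qed
  qed auto
  have injX0: "inj_on (blinfun_apply H) X0"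
  proof (rule inj_onI)
    fix a b assume ab: "a \<in> X0" "b \<in> X0" "H a = H b"
    then have "H (a - b) = 0" by (simp add: blinfun.diff_right)
    moreover have "a - b \<in> X0" using ab X0(2) by (simp add: subspace_diff)
    ultimately have "a - b = 0" using X0(3) by blast
    then show "a = b" by simp
  qed
  obtain c where c: "c > 0" "\<And>x. x \<in> X0 \<Longrightarrow> c * norm x \<le> norm (H x)"
  proof -
    have "closed (blinfun_apply H ` X0)" using ranX0 ran_closed unfolding H_def by simp
    from bounded_below[OF Hbl X0(1,2) this injX0] show ?thesis using that by blast
  qed
  define C1 where "C1 = norm H / c"
  have C1: "C1 \<ge> 0" using c by (simp add: C1_def)
  have decomp: "\<exists>v k. v \<in> X0 \<and> H k = 0 \<and> z = v + k \<and> norm v \<le> C1 * norm z \<and> norm k \<le> (1 + C1) * norm z" for z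
  proof -
    obtain v k where vk: "v \<in> X0" "H k = 0" "z = v + k" using X0(4) by blast
    have "H z = H v" using vk by (simp add: blinfun.add_right)
    then have "c * norm v \<le> norm H * norm z" using c(2)[OF vk(1)] norm_blinfun[of H z] by simp
    then have nv: "norm v \<le> C1 * norm z" using c(1) by (simp add: C1_def field_simps)
    have "norm k = norm (z - v)" using vk by simp
    also have "\<dots> \<le> norm z + norm v" by (rule norm_triangle_ineq4)
    also have "\<dots> \<le> (1 + C1) * norm z" using nv by (simp add: algebra_simps)
    finally show ?thesis using vk nv by blast
  qed

  define \<Lambda> where "\<Lambda> = norm H"
  define \<eta> where "\<eta> = c / 6"
  have \<eta>: "\<eta> > 0" using c by (simp add: \<eta>_def)
  have onorm_eq: "onorm (\<lambda>h. blinfun_apply P h - blinfun_apply P0 h) = norm (P - P0)"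
    for P P0 :: "'c::real_normed_vector \<Rightarrow>\<^sub>L 'd::real_normed_vector"
    by (simp add: norm_blinfun.rep_eq minus_blinfun.rep_eq)
  have seg: "a + t *\<^sub>R (b - a) \<in> ball z r" if "a \<in> ball z r" "b \<in> ball z r" "t \<in> {0..1}"
    for a b z :: 'a and r t
  proof -
    have "a + t *\<^sub>R (b - a) = (1 - t) *\<^sub>R a + t *\<^sub>R b" by (simp add: algebra_simps)
    then show ?thesis using that convex_ball[of z r] unfolding convex_def by auto
  qed
  obtain d1 where d1: "d1 > 0" "ball x_inf d1 \<subseteq> U" "\<And>q. q \<in> ball x_inf d1 \<Longrightarrow> norm (E'' q - H) \<le> \<eta>"
  proof -
    obtain r0 where r0: "r0 > 0" "ball x_inf r0 \<subseteq> U" using U_open x_in open_contains_ball by blast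
    obtain r1 where r1: "r1 > 0" "\<forall>x'\<in>U. dist x' x_inf < r1 \<longrightarrow> dist (E'' x') (E'' x_inf) < \<eta>"
      using E''_cont[unfolded continuous_on_iff] x_in \<eta> by blast
    show ?thesis
    proof (rule that[of "min r0 r1"])
      show "0 < min r0 r1" using r0 r1 by simp
      show "ball x_inf (min r0 r1) \<subseteq> U" using r0 by auto
      fix q assume q: "q \<in> ball x_inf (min r0 r1)"
      then have "q \<in> U" using r0 by auto
      moreover have "dist q x_inf < r1" using q by (simp add: dist_commute)
      ultimately show "norm (E'' q - H) \<le> \<eta>" using r1 by (auto simp: H_def dist_norm)
    qed
  qed
  have Lin1: "norm (E' b - E' a - H (b - a)) \<le> \<eta> * norm (b - a)"
    if ab: "a \<in> ball x_inf d1" "b \<in> ball x_inf d1" for a b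
  proof -
    have "norm (E' b - E' a - blinfun_apply (E'' x_inf) (b - a)) \<le> norm (b - a) * \<eta>"
    proof (rule differentiable_bound_linearization[where S="ball x_inf d1" and f'="\<lambda>q. blinfun_apply (E'' q)"])
      show "a + t *\<^sub>R (b - a) \<in> ball x_inf d1" if "t \<in> {0..1}" for t using seg ab that by blast
      show "(E' has_derivative blinfun_apply (E'' x)) (at x within ball x_inf d1)" if "x \<in> ball x_inf d1" for x
        using E''_deriv d1(2) that by (blast intro: has_derivative_at_withinI)
      show "onorm (blinfun_apply (E'' x) - blinfun_apply (E'' x_inf)) \<le> \<eta>" if "x \<in> ball x_inf d1" for x
        using d1(3)[OF that] onorm_eq[of "E'' x" "E'' x_inf"] by (simp add: fun_diff_def H_def)
      show "x_inf \<in> ball x_inf d1" using d1 by simp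
    qed
    then show ?thesis by (simp add: H_def mult.commute)
  qed
  define \<eta>2 where "\<eta>2 = min (1 / (2 * (norm A + 1))) (c / (4 * (\<Lambda> + 1) * (norm A + 1)))"
  have \<eta>2: "\<eta>2 > 0"
  proof -
    have a0: "norm A \<ge> 0" "\<Lambda> \<ge> 0" by (simp_all add: \<Lambda>_def)
    then have p1: "norm A + 1 > 0" "\<Lambda> + 1 > 0" by linarith+
    have "1 / (2 * (norm A + 1)) > 0" using p1 by simp
    moreover have "c / (4 * (\<Lambda> + 1) * (norm A + 1)) > 0" using p1 c by simp
    ultimately show ?thesis by (simp add: \<eta>2_def)
  qed
  have \<eta>2A: "\<eta>2 * norm A \<le> 1/2"
  proof -
    have "\<eta>2 * norm A \<le> (1 / (2 * (norm A + 1))) * norm A"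
      by (rule mult_right_mono) (simp_all add: \<eta>2_def)
    also have "\<dots> \<le> 1/2" by (rule h1) simp
    finally show ?thesis .
  qed
  have \<eta>2AL: "\<Lambda> * (\<eta>2 * norm A) \<le> c / 4"
  proof -
    have "\<eta>2 * norm A \<le> (c / (4 * (\<Lambda> + 1) * (norm A + 1))) * norm A"
      by (rule mult_right_mono) (simp_all add: \<eta>2_def)
    also have "\<dots> \<le> c / (4 * (\<Lambda> + 1))"
      using c by (intro h2) (simp_all add: \<Lambda>_def)
    finally have "\<Lambda> * (\<eta>2 * norm A) \<le> \<Lambda> * (c / (4 * (\<Lambda> + 1)))"
      by (rule mult_left_mono) (simp add: \<Lambda>_def)
    also have "\<dots> \<le> c / 4" using c by (intro h3) (simp_all add: \<Lambda>_def)
    finally show ?thesis .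
  qed
  obtain d2 where d2: "d2 > 0" "ball y0 d2 \<subseteq> W" "\<And>y. y \<in> ball y0 d2 \<Longrightarrow> norm (Lpsi y - B) \<le> \<eta>2"
  proof -
    obtain r0 where r0: "r0 > 0" "ball y0 r0 \<subseteq> W" using ch(3) y0W open_contains_ball by blast
    obtain r1 where r1: "r1 > 0" "\<forall>x'\<in>W. dist x' y0 < r1 \<longrightarrow> dist (Lpsi x') (Lpsi y0) < \<eta>2"
      using Lpsic[unfolded continuous_on_iff] y0W \<eta>2 by blast
    show ?thesis
    proof (rule that[of "min r0 r1"])
      show "0 < min r0 r1" using r0 r1 by simp
      show "ball y0 (min r0 r1) \<subseteq> W" using r0 by auto
      fix q assume q: "q \<in> ball y0 (min r0 r1)"
      then have "q \<in> W" using r0 by auto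
      moreover have "dist q y0 < r1" using q by (simp add: dist_commute)
      ultimately show "norm (Lpsi q - B) \<le> \<eta>2" using r1 by (auto simp: B_def dist_norm)
    qed
  qed
  have Lin2: "norm (psi b - psi a - B (b - a)) \<le> \<eta>2 * norm (b - a)"
    if ab: "a \<in> ball y0 d2" "b \<in> ball y0 d2" for a b
  proof -
    have "norm (psi b - psi a - blinfun_apply (Lpsi y0) (b - a)) \<le> norm (b - a) * \<eta>2"
    proof (rule differentiable_bound_linearization[where S="ball y0 d2" and f'="\<lambda>q. blinfun_apply (Lpsi q)"])
      show "a + t *\<^sub>R (b - a) \<in> ball y0 d2" if "t \<in> {0..1}" for t using seg ab that by blast
      show "(psi has_derivative blinfun_apply (Lpsi x)) (at x within ball y0 d2)" if "x \<in> ball y0 d2" for x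
        using Lpsi d2(2) that by (blast intro: has_derivative_at_withinI)
      show "onorm (blinfun_apply (Lpsi x) - blinfun_apply (Lpsi y0)) \<le> \<eta>2" if "x \<in> ball y0 d2" for x
        using d2(3)[OF that] onorm_eq[of "Lpsi x" "Lpsi y0"] by (simp add: fun_diff_def B_def)
      show "y0 \<in> ball y0 d2" using d2 by simp
    qed
    then show ?thesis by (simp add: B_def mult.commute)
  qed
  have const: "E (psi (y0 + f)) = E x_inf" if f: "f \<in> F" "y0 + f \<in> ball y0 d2" for f
  proof -
    define g where "g s = E (psi (y0 + s *\<^sub>R f))" for s :: real
    have inS: "y0 + s *\<^sub>R f \<in> ball y0 d2 \<and> y0 + s *\<^sub>R f \<in> F" if s: "s \<in> {0..1}" for s
    proof
      have "norm (s *\<^sub>R f) \<le> norm f" using s by (simp add: mult_left_le_one_le)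
      then show "y0 + s *\<^sub>R f \<in> ball y0 d2" using f(2) by (simp add: dist_norm)
      show "y0 + s *\<^sub>R f \<in> F" using y0F f(1) ch(5) by (simp add: subspace_add subspace_scale)
    qed
    have "(g has_derivative (\<lambda>h. 0)) (at s within {0..1})" if s: "s \<in> {0..1}" for s
    proof -
      let ?y = "y0 + s *\<^sub>R f"
      have yW: "?y \<in> W \<inter> F" using inS[OF s] d2(2) by blast
      then have pM: "psi ?y \<in> M" by (rule psiM)
      have l1: "((\<lambda>s. y0 + s *\<^sub>R f) has_derivative (\<lambda>t. t *\<^sub>R f)) (at s within {0..1})"
        by (auto intro!: derivative_eq_intros)
      have l2: "((\<lambda>s. psi (y0 + s *\<^sub>R f)) has_derivative (\<lambda>t. Lpsi ?y (t *\<^sub>R f))) (at s within {0..1})"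
        using has_derivative_compose[OF l1 Lpsi] yW by blast
      have l3: "(g has_derivative (\<lambda>t. E' (psi ?y) (Lpsi ?y (t *\<^sub>R f)))) (at s within {0..1})"
        unfolding g_def using has_derivative_compose[OF l2 bspec[OF E'_deriv]] Mcrit[OF pM] by blast
      then show ?thesis using Mcrit[OF pM] by simp
    qed
    then obtain C where "\<forall>s\<in>{0..1}. g s = C" using has_derivative_zero_constant[of "{0..1::real}" g] by auto
    then have "g 1 = g 0" by auto
    then show ?thesis by (simp add: g_def psiy0)
  qed

  have phic: "continuous (at x_inf) phi" using Lphi[OF ch(2)] by (rule has_derivative_continuous)
  have psic: "continuous (at y0) psi" using Lpsi[OF y0W] by (rule has_derivative_continuous)
  obtain r2 where r2: "r2 > 0" "\<And>y. dist y y0 < r2 \<Longrightarrow> dist (psi y) x_inf < d1"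
    using psic[unfolded continuous_at_eps_delta] d1(1) psiy0 by metis
  define \<rho> where "\<rho> = min d2 r2"
  have \<rho>: "\<rho> > 0" "\<rho> \<le> d2" "\<rho> \<le> r2" using d2 r2 by (auto simp: \<rho>_def)
  define K0 where "K0 = norm A * (1 + C1) * norm B"
  have K0: "K0 \<ge> 0" using C1 by (simp add: K0_def)
  define \<rho>' where "\<rho>' = \<rho> / (K0 + 1)"
  have \<rho>': "\<rho>' > 0" "\<rho>' \<le> \<rho>" "K0 * \<rho>' < \<rho>"
  proof -
    show "\<rho>' > 0" using \<rho> K0 by (simp add: \<rho>'_def)
    show "\<rho>' \<le> \<rho>" using \<rho> K0 by (simp add: \<rho>'_def divide_le_eq)
    have "K0 * \<rho>' = \<rho> - \<rho>'" using K0 by (simp add: \<rho>'_def field_simps)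
    then show "K0 * \<rho>' < \<rho>" using \<open>\<rho>' > 0\<close> by simp
  qed
  obtain r3 where r3: "r3 > 0" "\<And>x. dist x x_inf < r3 \<Longrightarrow> dist (phi x) y0 < \<rho>'"
    using phic[unfolded continuous_at_eps_delta] \<rho>'(1) y0_def by metis
  obtain r4 where r4: "r4 > 0" "ball x_inf r4 \<subseteq> V" using ch(1,2) open_contains_ball by blast
  define \<sigma> where "\<sigma> = min 1 (min d1 (min r3 r4))"
  have \<sigma>: "\<sigma> > 0" "\<sigma> \<le> 1" "\<sigma> \<le> d1" "\<sigma> \<le> r3" "\<sigma> \<le> r4" using d1 r3 r4 by (auto simp: \<sigma>_def)
  define Q where "Q = (\<Lambda> + \<eta>) * (9/4)"
  have Q: "Q \<ge> 0" using \<eta> by (simp add: Q_def \<Lambda>_def)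
  define Z where "Z = c / (2 * (sqrt Q + 1))"
  have Z: "Z > 0" using c Q by (simp add: Z_def add_nonneg_pos)
  have main: "\<forall>x\<in>U. norm (x - x_inf) < \<sigma> \<longrightarrow> norm (E' x) \<ge> Z * \<bar>E x - E x_inf\<bar> powr (1/2)"
  proof (intro ballI impI)
    fix x assume xU: "x \<in> U" and xs: "norm (x - x_inf) < \<sigma>"
    have dx: "dist x x_inf < \<sigma>" using xs by (simp add: dist_norm)
    have xV: "x \<in> V" using r4 dx \<sigma> by (auto simp: dist_commute)
    have xb: "x \<in> ball x_inf d1" using dx \<sigma> by (simp add: dist_commute)
    define y where "y = phi x"
    have yW: "y \<in> W" using xV ch(6) y_def by blast
    have psiy: "psi y = x" using xV ch(7) y_def by simp
    have dy: "norm (y - y0) < \<rho>'" using r3(2)[of x] dx \<sigma> by (simp add: y_def dist_norm)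
    define z where "z = B (y - y0)"
    have nz: "norm z \<le> norm B * norm (y - y0)" unfolding z_def by (rule norm_blinfun)
    obtain v k where vk: "v \<in> X0" "H k = 0" "z = v + k" "norm v \<le> C1 * norm z" "norm k \<le> (1 + C1) * norm z"
      using decomp[of z] by blast
    have Az: "A z = y - y0" unfolding z_def by (rule AB)
    define q0 where "q0 = y0 + A k"
    have AkF: "A k \<in> F" using AK[OF vk(2)] .
    have q0F: "q0 \<in> F" using y0F AkF ch(5) by (simp add: q0_def subspace_add)
    have nAk: "norm (A k) < \<rho>"
    proof -
      have "norm (A k) \<le> norm A * norm k" by (rule norm_blinfun)
      also have "\<dots> \<le> norm A * ((1 + C1) * (norm B * norm (y - y0)))"
        using vk(5) nz C1 by (intro mult_left_mono) (auto intro: order_trans mult_left_mono)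
      also have "\<dots> = K0 * norm (y - y0)" by (simp add: K0_def)
      also have "\<dots> \<le> K0 * \<rho>'" using dy K0 by (simp add: mult_left_mono)
      also have "\<dots> < \<rho>" by (rule \<rho>'(3))
      finally show ?thesis .
    qed
    have q0b: "q0 \<in> ball y0 d2" using nAk \<rho> by (simp add: q0_def dist_norm)
    have q0W: "q0 \<in> W \<inter> F" using q0b d2(2) q0F by blast
    define p where "p = psi q0"
    have pM: "p \<in> M" using psiM[OF q0W] by (simp add: p_def)
    have E'p: "E' p = 0" using Mcrit[OF pM] by simp
    have Ep: "E p = E x_inf" using const[OF AkF] q0b by (simp add: p_def q0_def)
    have pb: "p \<in> ball x_inf d1"
      using r2(2)[of q0] nAk \<rho> by (simp add: p_def q0_def dist_norm norm_minus_commute)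
    have yb: "y \<in> ball y0 d2" using dy \<rho> \<rho>' by (simp add: dist_norm norm_minus_commute)
    have yq: "y = q0 + A v"
    proof -
      have "y - y0 = A v + A k" using Az vk(3) by (simp add: blinfun.add_right)
      then show ?thesis by (simp add: q0_def algebra_simps)
    qed
    define e1 where "e1 = x - p - v"
    have ne1: "norm e1 \<le> \<eta>2 * norm A * norm v"
    proof -
      have "norm (psi y - psi q0 - B (y - q0)) \<le> \<eta>2 * norm (y - q0)" by (rule Lin2[OF q0b yb])
      moreover have "psi y - psi q0 - B (y - q0) = e1" using yq BA psiy by (simp add: e1_def p_def)
      moreover have "norm (y - q0) \<le> norm A * norm v" using yq norm_blinfun[of A v] by simp
      ultimately show ?thesis using \<eta>2 by (smt (verit) mult.assoc mult_left_mono)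
    qed
    have nv0: "norm v \<ge> 0" by simp
    have ne1': "norm e1 \<le> norm v / 2"
      using ne1 mult_right_mono[OF \<eta>2A nv0] by linarith
    have ne1'': "\<Lambda> * norm e1 \<le> c / 4 * norm v"
    proof -
      have "\<Lambda> * norm e1 \<le> \<Lambda> * (\<eta>2 * norm A * norm v)" using ne1 by (simp add: \<Lambda>_def mult_left_mono)
      also have "\<dots> = (\<Lambda> * (\<eta>2 * norm A)) * norm v" by simp
      also have "\<dots> \<le> c / 4 * norm v" by (rule mult_right_mono[OF \<eta>2AL]) simp
      finally show ?thesis .
    qed
    have xp: "x - p = v + e1" by (simp add: e1_def)
    have nxp: "norm (x - p) \<le> 3/2 * norm v" using xp ne1' norm_triangle_ineq[of v e1] by simp
    have L1: "norm (E' x - H (x - p)) \<le> \<eta> * norm (x - p)" using Lin1[OF pb xb] E'p by simp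
    have "norm (H (x - p)) \<ge> c * norm v - c / 4 * norm v"
    proof -
      have "norm (H (x - p)) = norm (H v + H e1)" using xp by (simp add: blinfun.add_right)
      moreover have "norm (H e1) \<le> c / 4 * norm v"
        using norm_blinfun[of H e1] ne1'' by (simp add: \<Lambda>_def)
      moreover have "c * norm v \<le> norm (H v)" by (rule c(2)[OF vk(1)])
      moreover have "norm (H v) - norm (H e1) \<le> norm (H v + H e1)" by (rule norm_diff_ineq)
      ultimately show ?thesis by linarith
    qed
    moreover have "norm (H (x - p)) \<le> norm (E' x) + norm (E' x - H (x - p))"
      using norm_triangle_sub[of "H (x - p)" "E' x"] by (simp add: norm_minus_commute)
    moreover have "\<eta> * norm (x - p) \<le> \<eta> * (3/2 * norm v)" using nxp \<eta> by (simp add: mult_left_mono)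
    moreover have "\<eta> * (3/2 * norm v) = c / 4 * norm v" by (simp add: \<eta>_def)
    ultimately have gradv: "norm (E' x) \<ge> c / 2 * norm v" using L1 by linarith
    define S where "S = cball p (norm (x - p)) \<inter> ball x_inf d1"
    have Eb: "norm (E x - E p) \<le> ((\<Lambda> + \<eta>) * norm (x - p)) * norm (x - p)"
    proof (rule differentiable_bound[where S=S and f'="\<lambda>q. blinfun_apply (E' q)"])
      show "convex S" by (simp add: S_def convex_Int)
      show "(E has_derivative blinfun_apply (E' q)) (at q within S)" if "q \<in> S" for q
      proof -
        have "q \<in> U" using that d1(2) by (auto simp: S_def)
        then show ?thesis using E'_deriv has_derivative_at_withinI by blast
      qed
      show "onorm (blinfun_apply (E' q)) \<le> (\<Lambda> + \<eta>) * norm (x - p)" if q: "q \<in> S" for q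
      proof -
        have qb: "q \<in> ball x_inf d1" and dq: "norm (q - p) \<le> norm (x - p)"
          using q by (auto simp: S_def dist_norm norm_minus_commute)
        have "norm (E' q - H (q - p)) \<le> \<eta> * norm (q - p)" using Lin1[OF pb qb] E'p by simp
        moreover have "norm (H (q - p)) \<le> \<Lambda> * norm (q - p)" by (simp add: \<Lambda>_def norm_blinfun)
        moreover have "norm (E' q) \<le> norm (E' q - H (q - p)) + norm (H (q - p))"
          using norm_triangle_sub[of "E' q" "H (q - p)"] by (simp add: add.commute)
        ultimately have "norm (E' q) \<le> (\<Lambda> + \<eta>) * norm (q - p)" by (simp add: distrib_right)
        also have "\<dots> \<le> (\<Lambda> + \<eta>) * norm (x - p)" using dq \<eta> by (intro mult_left_mono) (auto simp: \<Lambda>_def)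
        finally show ?thesis by (simp add: norm_blinfun.rep_eq)
      qed
      show "x \<in> S" using xb by (simp add: S_def dist_norm norm_minus_commute)
      show "p \<in> S" using pb by (simp add: S_def)
    qed
    have "\<bar>E x - E x_inf\<bar> \<le> Q * (norm v)\<^sup>2"
    proof -
      have "\<bar>E x - E x_inf\<bar> \<le> (\<Lambda> + \<eta>) * (norm (x - p))\<^sup>2" using Eb Ep by (simp add: power2_eq_square mult.assoc)
      also have "\<dots> \<le> (\<Lambda> + \<eta>) * (3/2 * norm v)\<^sup>2"
        using nxp \<eta> by (intro mult_left_mono power_mono) (auto simp: \<Lambda>_def)
      also have "\<dots> = Q * (norm v)\<^sup>2" by (simp add: Q_def power2_eq_square)
      finally show ?thesis .
    qed
    then have "sqrt \<bar>E x - E x_inf\<bar> \<le> sqrt (Q * (norm v)\<^sup>2)" by (rule real_sqrt_le_mono)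
    also have "\<dots> = sqrt Q * norm v" by (simp add: real_sqrt_mult)
    also have "\<dots> \<le> (sqrt Q + 1) * norm v" by (simp add: distrib_right)
    finally have "\<bar>E x - E x_inf\<bar> powr (1/2) \<le> (sqrt Q + 1) * norm v"
      by (simp add: powr_half_sqrt)
    then have "Z * \<bar>E x - E x_inf\<bar> powr (1/2) \<le> Z * ((sqrt Q + 1) * norm v)" using Z by simp
    also have "\<dots> = c / 2 * norm v"
    proof -
      have "sqrt Q \<ge> 0" using Q by simp
      then have s1: "sqrt Q + 1 > 0" by linarith
      then have "Z * (sqrt Q + 1) = c / 2" unfolding Z_def by (intro hz) simp
      then show ?thesis by (metis mult.assoc)
    qed
    finally show "Z * \<bar>E x - E x_inf\<bar> powr (1/2) \<le> norm (E' x)" using gradv by simp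
  qed
  show ?thesis using Z \<sigma> main by blast
qed

end
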